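(* Let $n\ge 2$, let $A\in\mathbb{R}^{n\times n}$ be symmetric positive definite, $B=A^{1/2}$, and $E=\{x\in\mathbb{R}^n: x^{\top}A^{-1}x=1\}$. For every parallelepiped $P$ inscribed in $E$, \[ L(P)\ \le\ L_{\max}(E):=2^{n}\sqrt{\operatorname{tr}(A)}. \] Equality holds if and only if the edge vectors of $P$ are $v_i=\lambda_iBu_i$ where $U=[u_1\ \cdots\ u_n]\in O(n)$, $\lambda_i>0$, $\sum_i\lambda_i^2=4$, and \[ \lambda_i\ \propto\ \sqrt{u_i^{\top}A\,u_i}\qquad(i=1,\dots,n). \] In particular, for any $U\in O(n)$ the choice \[ \lambda_i=\frac{2\,\sqrt{u_i^{\top}A\,u_i}}{\sqrt{\operatorname{tr}(A)}} \] yields a parallelepiped with edge vectors $v_i=\lambda_iBu_i$ that is inscribed in $E$ and attains $L(P)=L_{\max}(E)$.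
   Context: A (centred, $n$-dimensional) parallelepiped with linearly independent edge vectors $v_1,\dots,v_n\in\mathbb{R}^n$ is $P=\{\sum_{i=1}^n t_iv_i : |t_i|\le \tfrac12\}$; its $2^n$ vertices are $\tfrac12\sum_i\varepsilon_iv_i$, $\varepsilon\in\{\pm1\}^n$. $P$ is inscribed in $E$ if all its vertices satisfy $x^{\top}A^{-1}x=1$. The total edge length (total $1$-dimensional measure of the $1$-skeleton) is $L(P)=2^{n-1}\sum_{i=1}^n\|v_i\|$. *)

theory Defs
  imports "HOL-Analysis.Analysis"
begin

definition sym_pos_def_mat :: "real^'n^'n \<Rightarrow> bool" where
  "sym_pos_def_mat A \<longleftrightarrow> transpose A = A \<and> (\<forall>x. x \<noteq> 0 \<longrightarrow> x \<bullet> (A *v x) > 0)"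

definition lin_indep_family :: "('n \<Rightarrow> real^'n) \<Rightarrow> bool" where
  "lin_indep_family v \<longleftrightarrow> inj v \<and> independent (range v)"

definition ppd_vertices :: "('n::finite \<Rightarrow> real^'n) \<Rightarrow> (real^'n) set" where
  "ppd_vertices v = {(1/2) *\<^sub>R (\<Sum>i\<in>UNIV. eps i *\<^sub>R v i) | eps. \<forall>i. eps i \<in> {-1, 1}}"

definition inscribed :: "real^'n^'n \<Rightarrow> ('n::finite \<Rightarrow> real^'n) \<Rightarrow> bool" where
  "inscribed A v \<longleftrightarrow> (\<forall>x\<in>ppd_vertices v. x \<bullet> (matrix_inv A *v x) = 1)"

definition total_edge_length :: "('n::finite \<Rightarrow> real^'n) \<Rightarrow> real" where
  "total_edge_length v = 2 ^ (CARD('n) - 1) * (\<Sum>i\<in>UNIV. norm (v i))"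

end

theory Submission
  imports Defs
begin

lemma spd_inj:
  fixes B :: "real^'n::finite^'n"
  assumes "sym_pos_def_mat B" shows "inj ((*v) B)"
proof (rule injI)
  fix x y assume "B *v x = B *v y"
  hence "B *v (x - y) = 0" by (simp add: matrix_vector_mult_diff_distrib)
  hence "(x - y) \<bullet> (B *v (x - y)) = 0" by simp
  thus "x = y" using assms unfolding sym_pos_def_mat_def by (metis less_irrefl right_minus_eq)
qed

lemma spd_right_inv:
  fixes B :: "real^'n::finite^'n"
  assumes "sym_pos_def_mat B" shows "B ** matrix_inv B = mat 1"
proof -
  obtain B' where "B' ** B = mat 1"
    using spd_inj[OF assms] matrix_left_invertible_injective by blast
  hence "invertible B" unfolding invertible_def using matrix_left_right_inverse by blast
  hence "\<exists>A'. B ** A' = mat 1 \<and> A' ** B = mat 1" unfolding invertible_def .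
  from someI_ex[OF this] show ?thesis unfolding matrix_inv_def by blast
qed

lemma spd_surj:
  fixes B :: "real^'n::finite^'n"
  assumes "sym_pos_def_mat B" shows "B *v (matrix_inv B *v y) = y"
  by (simp add: matrix_vector_mul_assoc spd_right_inv[OF assms])

lemma transp_inner:
  fixes B :: "real^'n::finite^'n"
  assumes "transpose B = B" shows "(B *v y) \<bullet> z = y \<bullet> (B *v z)"
proof -
  have "(B *v y) \<bullet> z = z \<bullet> (B *v y)" by (simp add: inner_commute)
  also have "\<dots> = (z v* B) \<bullet> y" by (simp add: dot_lmul_matrix)
  also have "z v* B = transpose B *v z" by simp
  finally show ?thesis using assms by (simp add: inner_commute)
qed

lemma quad_form:
  fixes A B :: "real^'n::finite^'n"
  assumes A: "sym_pos_def_mat A" and B: "sym_pos_def_mat B" "B ** B = A"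
  shows "(B *v y) \<bullet> (matrix_inv A *v (B *v y)) = y \<bullet> y"
proof -
  define z where "z = matrix_inv A *v (B *v y)"
  have "A *v z = B *v y" unfolding z_def by (rule spd_surj[OF A])
  hence "B *v (B *v z) = B *v y" using B(2) by (simp add: matrix_vector_mul_assoc)
  hence Bz: "B *v z = y" using spd_inj[OF B(1)] by (simp add: inj_eq)
  have "(B *v y) \<bullet> z = y \<bullet> (B *v z)"
    using B(1) transp_inner unfolding sym_pos_def_mat_def by blast
  thus ?thesis using Bz z_def by simp
qed

lemma normB:
  fixes A B :: "real^'n::finite^'n"
  assumes B: "sym_pos_def_mat B" "B ** B = A"
  shows "norm (B *v u) = sqrt (u \<bullet> (A *v u))"
proof -
  have "(B *v u) \<bullet> (B *v u) = u \<bullet> (B *v (B *v u))"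
    using B(1) transp_inner unfolding sym_pos_def_mat_def by blast
  also have "\<dots> = u \<bullet> (A *v u)" using B(2) by (simp add: matrix_vector_mul_assoc)
  finally show ?thesis by (simp add: norm_eq_sqrt_inner)
qed

lemma trace_orth:
  fixes A U :: "real^'n::finite^'n"
  assumes "orthogonal_matrix U"
  shows "(\<Sum>i\<in>UNIV. column i U \<bullet> (A *v column i U)) = trace A"
proof -
  have UU: "U ** transpose U = mat 1" using assms unfolding orthogonal_matrix_def by blast
  have e: "(\<Sum>i\<in>UNIV. U$r$i * U$s$i) = (if r = s then 1 else 0)" for r s
    using arg_cong[OF UU, of "\<lambda>M. M$r$s"]
    by (simp add: matrix_matrix_mult_def transpose_def mat_def)
  have c: "column i U \<bullet> (A *v column i U) = (\<Sum>r\<in>UNIV. \<Sum>s\<in>UNIV. A$r$s * (U$r$i * U$s$i))" for i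
    unfolding inner_vec_def column_def matrix_vector_mult_def
    by (simp add: sum_distrib_left mult.assoc mult.left_commute)
  have "(\<Sum>i\<in>UNIV. column i U \<bullet> (A *v column i U))
     = (\<Sum>i\<in>UNIV. \<Sum>r\<in>UNIV. \<Sum>s\<in>UNIV. A$r$s * (U$r$i * U$s$i))"
    by (simp add: c)
  also have "\<dots> = (\<Sum>r\<in>UNIV. \<Sum>i\<in>UNIV. \<Sum>s\<in>UNIV. A$r$s * (U$r$i * U$s$i))"
    by (rule sum.swap)
  also have "\<dots> = (\<Sum>r\<in>UNIV. \<Sum>s\<in>UNIV. \<Sum>i\<in>UNIV. A$r$s * (U$r$i * U$s$i))"
    by (rule sum.cong[OF refl], rule sum.swap)
  also have "\<dots> = (\<Sum>r\<in>UNIV. \<Sum>s\<in>UNIV. A$r$s * (\<Sum>i\<in>UNIV. U$r$i * U$s$i))"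
    by (simp add: sum_distrib_left)
  also have "\<dots> = trace A" by (simp add: e trace_def if_distrib sum.delta cong: if_cong)
  finally show ?thesis .
qed



lemma mv_sum:
  fixes B :: "real^'n::finite^'n"
  shows "B *v (\<Sum>i\<in>S. f i) = (\<Sum>i\<in>S. B *v f i)"
  by (simp add: linear_sum[OF matrix_vector_mul_linear] o_def)

lemma split2:
  fixes g :: "'n::finite \<Rightarrow> 'a::comm_monoid_add"
  assumes "i \<noteq> j"
  shows "(\<Sum>k\<in>UNIV. g k) = g i + g j + (\<Sum>k\<in>UNIV-{i,j}. g k)"
proof -
  have "(\<Sum>k\<in>UNIV. g k) = g i + (\<Sum>k\<in>UNIV-{i}. g k)"
    by (simp add: sum.remove)
  also have "(\<Sum>k\<in>UNIV-{i}. g k) = g j + (\<Sum>k\<in>UNIV-{i}-{j}. g k)"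
    using assms by (subst sum.remove[of _ j]) auto
  also have "UNIV-{i}-{j} = UNIV-{i,j}" by auto
  finally show ?thesis by (simp add: add.assoc)
qed

lemma decomp:
  fixes A B :: "real^'n::finite^'n" and v :: "'n \<Rightarrow> real^'n"
  assumes A: "sym_pos_def_mat A" and B: "sym_pos_def_mat B" "B ** B = A"
    and li: "lin_indep_family v" and ins: "inscribed A v"
  shows "\<exists>U lam. orthogonal_matrix U \<and> (\<forall>i. lam i > 0) \<and> (\<Sum>i\<in>UNIV. (lam i)\<^sup>2) = 4
            \<and> (\<forall>i. v i = lam i *\<^sub>R (B *v column i U))"
proof -
  define w where "w i = matrix_inv B *v v i" for i
  have Bw: "B *v w i = v i" for i unfolding w_def by (rule spd_surj[OF B(1)])
  have v0: "v i \<noteq> 0" for i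
    using li dependent_zero[of "range v"] unfolding lin_indep_family_def by (metis rangeI)
  have w0: "w i \<noteq> 0" for i using v0[of i] Bw[of i] by auto
  have Q: "(\<Sum>i\<in>UNIV. e i *\<^sub>R w i) \<bullet> (\<Sum>i\<in>UNIV. e i *\<^sub>R w i) = 4"
    if e: "\<forall>i. e i \<in> {-1, 1}" for e
  proof -
    define S where "S = (\<Sum>i\<in>UNIV. e i *\<^sub>R w i)"
    define x where "x = (1/2) *\<^sub>R (\<Sum>i\<in>UNIV. e i *\<^sub>R v i)"
    have "x \<in> ppd_vertices v" unfolding ppd_vertices_def x_def using e by blast
    hence x1: "x \<bullet> (matrix_inv A *v x) = 1" using ins unfolding inscribed_def by blast
    have "x = B *v ((1/2) *\<^sub>R S)"
      unfolding x_def S_def by (simp add: matrix_vector_mult_scaleR mv_sum Bw)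
    hence "x \<bullet> (matrix_inv A *v x) = ((1/2) *\<^sub>R S) \<bullet> ((1/2) *\<^sub>R S)"
      using quad_form[OF A B] by simp
    with x1 show ?thesis unfolding S_def by simp
  qed
  have orth: "w i \<bullet> w j = 0" if ij: "i \<noteq> j" for i j
  proof -
    define s where "s = (\<Sum>k\<in>UNIV-{i,j}. w k)"
    define f where "f a b = (\<lambda>k. if k = i then a else if k = j then b else (1::real))" for a b
    have sf: "(\<Sum>k\<in>UNIV. f a b k *\<^sub>R w k) = a *\<^sub>R w i + b *\<^sub>R w j + s" for a b
    proof -
      have "(\<Sum>k\<in>UNIV. f a b k *\<^sub>R w k) = f a b i *\<^sub>R w i + f a b j *\<^sub>R w j
              + (\<Sum>k\<in>UNIV-{i,j}. f a b k *\<^sub>R w k)" by (rule split2[OF ij])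
      also have "(\<Sum>k\<in>UNIV-{i,j}. f a b k *\<^sub>R w k) = s"
        unfolding s_def by (rule sum.cong) (auto simp: f_def)
      finally show ?thesis using ij by (simp add: f_def)
    qed
    have q: "(a *\<^sub>R w i + b *\<^sub>R w j + s) \<bullet> (a *\<^sub>R w i + b *\<^sub>R w j + s) = 4"
      if "a \<in> {-1,1}" "b \<in> {-1,1}" for a b
      using Q[of "f a b"] that sf[of a b] by (auto simp: f_def)
    have q1: "(w i + w j + s) \<bullet> (w i + w j + s) = 4" using q[of 1 1] by simp
    have q2: "(- w i + w j + s) \<bullet> (- w i + w j + s) = 4" using q[of "-1" 1] by simp
    have q3: "(w i - w j + s) \<bullet> (w i - w j + s) = 4" using q[of 1 "-1"] by simp
    have q4: "(- w i - w j + s) \<bullet> (- w i - w j + s) = 4" using q[of "-1" "-1"] by simp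
    show ?thesis using q1 q2 q3 q4
      by (simp add: inner_add_left inner_add_right inner_diff_left inner_diff_right inner_commute)
  qed
  have "(\<Sum>i\<in>UNIV. w i) \<bullet> (\<Sum>i\<in>UNIV. w i) = 4" using Q[of "\<lambda>_. 1"] by simp
  moreover have "(\<Sum>i\<in>UNIV. w i) \<bullet> (\<Sum>i\<in>UNIV. w i) = (\<Sum>i\<in>UNIV. w i \<bullet> w i)"
  proof -
    have "(\<Sum>i\<in>UNIV. w i) \<bullet> (\<Sum>i\<in>UNIV. w i) = (\<Sum>i\<in>UNIV. \<Sum>j\<in>UNIV. w i \<bullet> w j)"
      by (simp add: inner_sum_left inner_sum_right) (rule sum.swap)
    also have "\<dots> = (\<Sum>i\<in>UNIV. \<Sum>j\<in>UNIV. if j = i then w i \<bullet> w j else 0)"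
      using orth by (intro sum.cong refl) auto
    finally show ?thesis by simp
  qed
  ultimately have sq: "(\<Sum>i\<in>UNIV. w i \<bullet> w i) = 4" by simp
  define lam where "lam i = norm (w i)" for i
  define u where "u i = (1 / lam i) *\<^sub>R w i" for i
  define U :: "real^'n^'n" where "U = (\<chi> r i. u i $ r)"
  have lpos: "lam i > 0" for i using w0 unfolding lam_def by simp
  have cU: "column i U = u i" for i unfolding U_def column_def by (simp add: vec_eq_iff)
  have wu: "w i = lam i *\<^sub>R u i" for i using lpos[of i] unfolding u_def by simp
  have "orthogonal_matrix U"
    unfolding orthogonal_matrix_orthonormal_columns cU
  proof safe
    show "norm (u i) = 1" for i using lpos[of i] unfolding u_def lam_def by simp
    show "orthogonal (u i) (u j)" if "i \<noteq> j" for i j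
      using orth[OF that] unfolding u_def orthogonal_def by simp
  qed
  moreover have "(\<Sum>i\<in>UNIV. (lam i)\<^sup>2) = 4"
    using sq unfolding lam_def by (simp add: power2_norm_eq_inner)
  moreover have "v i = lam i *\<^sub>R (B *v column i U)" for i
    using Bw[of i] wu[of i] cU[of i] by (simp add: matrix_vector_mult_scaleR)
  ultimately show ?thesis using lpos by blast
qed


lemma cs_sum:
  fixes l a :: "'n::finite \<Rightarrow> real"
  shows "(\<Sum>i\<in>UNIV. l i * a i) \<le> sqrt (\<Sum>i\<in>UNIV. (l i)\<^sup>2) * sqrt (\<Sum>i\<in>UNIV. (a i)\<^sup>2)"
    and "(\<Sum>i\<in>UNIV. l i * a i) = sqrt (\<Sum>i\<in>UNIV. (l i)\<^sup>2) * sqrt (\<Sum>i\<in>UNIV. (a i)\<^sup>2)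
         \<Longrightarrow> sqrt (\<Sum>i\<in>UNIV. (l i)\<^sup>2) * a i = sqrt (\<Sum>i\<in>UNIV. (a i)\<^sup>2) * l i"
proof -
  define x :: "real^'n" where "x = (\<chi> i. l i)"
  define y :: "real^'n" where "y = (\<chi> i. a i)"
  have xy: "x \<bullet> y = (\<Sum>i\<in>UNIV. l i * a i)" unfolding x_def y_def inner_vec_def by simp
  have nx: "norm x = sqrt (\<Sum>i\<in>UNIV. (l i)\<^sup>2)"
    unfolding norm_eq_sqrt_inner x_def inner_vec_def by (simp add: power2_eq_square)
  have ny: "norm y = sqrt (\<Sum>i\<in>UNIV. (a i)\<^sup>2)"
    unfolding norm_eq_sqrt_inner y_def inner_vec_def by (simp add: power2_eq_square)
  show "(\<Sum>i\<in>UNIV. l i * a i) \<le> sqrt (\<Sum>i\<in>UNIV. (l i)\<^sup>2) * sqrt (\<Sum>i\<in>UNIV. (a i)\<^sup>2)"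
    using norm_cauchy_schwarz[of x y] xy nx ny by simp
  assume "(\<Sum>i\<in>UNIV. l i * a i) = sqrt (\<Sum>i\<in>UNIV. (l i)\<^sup>2) * sqrt (\<Sum>i\<in>UNIV. (a i)\<^sup>2)"
  hence "norm x *\<^sub>R y = norm y *\<^sub>R x" using norm_cauchy_schwarz_eq[of x y] xy nx ny by simp
  hence "(norm x *\<^sub>R y) $ i = (norm y *\<^sub>R x) $ i" by simp
  thus "sqrt (\<Sum>i\<in>UNIV. (l i)\<^sup>2) * a i = sqrt (\<Sum>i\<in>UNIV. (a i)\<^sup>2) * l i"
    using nx ny unfolding x_def y_def by simp
qed

lemma sumnorm:
  fixes A B U :: "real^'n::finite^'n"
  assumes B: "sym_pos_def_mat B" "B ** B = A" and l: "\<forall>i. lam i \<ge> 0"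
    and v: "\<forall>i. v i = lam i *\<^sub>R (B *v column i U)"
  shows "(\<Sum>i\<in>UNIV. norm (v i)) = (\<Sum>i\<in>UNIV. lam i * sqrt (column i U \<bullet> (A *v column i U)))"
  using normB[OF B] l v by simp

lemma apos:
  fixes A U :: "real^'n::finite^'n"
  assumes A: "sym_pos_def_mat A" and U: "orthogonal_matrix U"
  shows "column i U \<bullet> (A *v column i U) > 0"
proof -
  have "norm (column i U) = 1" using U orthogonal_matrix_orthonormal_columns by blast
  hence "column i U \<noteq> 0" by auto
  thus ?thesis using A unfolding sym_pos_def_mat_def by blast
qed

lemma asq:
  fixes A U :: "real^'n::finite^'n"
  assumes A: "sym_pos_def_mat A" and U: "orthogonal_matrix U"
  shows "(\<Sum>i\<in>UNIV. (sqrt (column i U \<bullet> (A *v column i U)))\<^sup>2) = trace A"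
    and "trace A > 0"
proof -
  show 1: "(\<Sum>i\<in>UNIV. (sqrt (column i U \<bullet> (A *v column i U)))\<^sup>2) = trace A"
    using apos[OF A U] trace_orth[OF U, of A] by (simp add: less_imp_le)
  have "(\<Sum>i\<in>UNIV. column i U \<bullet> (A *v column i U)) > 0"
    using apos[OF A U] by (intro sum_pos) auto
  thus "trace A > 0" using trace_orth[OF U, of A] by simp
qed



lemma part3:
  fixes A B U :: "real^'n::finite^'n"
  assumes A_spd: "sym_pos_def_mat A"
    and B_sqrt: "sym_pos_def_mat B" "B ** B = A"
    and U: "orthogonal_matrix U" and n1: "CARD('n) \<ge> 1"
  shows "(let lam = (\<lambda>i. 2 * sqrt (column i U \<bullet> (A *v column i U)) / sqrt (trace A));
             v = (\<lambda>i. lam i *\<^sub>R (B *v column i U))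
         in lin_indep_family v \<and> inscribed A v \<and>
            total_edge_length v = 2 ^ CARD('n) * sqrt (trace A))"
proof -
  define a where "a i = sqrt (column i U \<bullet> (A *v column i U))" for i
  define lam where "lam i = 2 * a i / sqrt (trace A)" for i
  define v where "v i = lam i *\<^sub>R (B *v column i U)" for i
  define u where "u i = lam i *\<^sub>R column i U" for i
  have tA: "trace A > 0" and sa: "(\<Sum>i\<in>UNIV. (a i)\<^sup>2) = trace A"
    using asq[OF A_spd U] unfolding a_def by auto
  have apo: "a i > 0" for i unfolding a_def using apos[OF A_spd U] by simp
  have lpos: "lam i > 0" for i unfolding lam_def using apo[of i] tA by simp
  have sl: "(\<Sum>i\<in>UNIV. (lam i)\<^sup>2) = 4"
  proof -
    have "(\<Sum>i\<in>UNIV. (lam i)\<^sup>2) = (\<Sum>i\<in>UNIV. 4 / trace A * (a i)\<^sup>2)"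
      unfolding lam_def using tA by (intro sum.cong refl) (simp add: power_divide power_mult_distrib)
    also have "\<dots> = 4 / trace A * (\<Sum>i\<in>UNIV. (a i)\<^sup>2)" by (rule sum_distrib_left[symmetric])
    also have "\<dots> = 4" using sa tA by simp
    finally show ?thesis .
  qed
  have cc: "column i U \<bullet> column j U = (if i = j then 1 else 0)" for i j
    using U unfolding orthogonal_matrix_orthonormal_columns orthogonal_def
    by (auto simp: norm_eq_1)
  have vu: "v i = B *v u i" for i unfolding v_def u_def by (simp add: matrix_vector_mult_scaleR)
  have uu: "u i \<bullet> u j = (if i = j then (lam i)\<^sup>2 else 0)" for i j
    unfolding u_def using cc[of i j] by (simp add: power2_eq_square)
  have "inscribed A v"
    unfolding inscribed_def ppd_vertices_def
  proof safe
    fix e :: "'n \<Rightarrow> real" assume e: "\<forall>i. e i \<in> {-1, 1}"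
    have e2: "(e i)\<^sup>2 = 1" for i using e[rule_format, of i] by auto
    define y where "y = (1/2) *\<^sub>R (\<Sum>i\<in>UNIV. e i *\<^sub>R u i)"
    have xy: "(1/2) *\<^sub>R (\<Sum>i\<in>UNIV. e i *\<^sub>R v i) = B *v y"
      unfolding y_def by (simp add: vu matrix_vector_mult_scaleR mv_sum)
    have "(\<Sum>i\<in>UNIV. e i *\<^sub>R u i) \<bullet> (\<Sum>i\<in>UNIV. e i *\<^sub>R u i)
        = (\<Sum>i\<in>UNIV. \<Sum>j\<in>UNIV. e i * e j * (u i \<bullet> u j))"
      by (simp add: inner_sum_left inner_sum_right sum_distrib_left mult.assoc)
         (intro sum.cong refl, simp add: inner_commute)
    also have "\<dots> = (\<Sum>i\<in>UNIV. \<Sum>j\<in>UNIV. if j = i then (lam i)\<^sup>2 else 0)"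
      using e2 by (intro sum.cong refl) (auto simp: uu power2_eq_square)
    also have "\<dots> = 4" using sl by simp
    finally have "y \<bullet> y = 1" unfolding y_def by simp
    thus "((1/2) *\<^sub>R (\<Sum>i\<in>UNIV. e i *\<^sub>R v i)) \<bullet> (matrix_inv A *v ((1/2) *\<^sub>R (\<Sum>i\<in>UNIV. e i *\<^sub>R v i))) = 1"
      unfolding xy using quad_form[OF A_spd B_sqrt] by simp
  qed
  moreover have "lin_indep_family v"
  proof -
    have uinj: "inj u"
    proof (rule injI)
      fix i j assume "u i = u j"
      hence "u i \<bullet> u i = u i \<bullet> u j" by simp
      thus "i = j" using uu[of i i] uu[of i j] lpos[of i] by (auto split: if_splits)
    qed
    have "independent (range u)"
    proof (rule pairwise_orthogonal_independent)
      show "pairwise orthogonal (range u)"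
        unfolding pairwise_def orthogonal_def using uu by auto
      show "0 \<notin> range u"
      proof
        assume "0 \<in> range u" then obtain i where "u i = 0" by auto
        thus False using uu[of i i] lpos[of i] by simp
      qed
    qed
    moreover have "inj_on ((*v) B) (span (range u))"
      using spd_inj[OF B_sqrt(1)] inj_on_subset subset_UNIV by metis
    ultimately have "independent ((*v) B ` range u)"
      by (rule linear_independent_injective_image[OF matrix_vector_mul_linear])
    moreover have "range v = (*v) B ` range u" using vu by auto
    ultimately have "independent (range v)" by simp
    moreover have "inj v"
      using uinj spd_inj[OF B_sqrt(1)] vu unfolding inj_def by metis
    ultimately show ?thesis unfolding lin_indep_family_def by blast
  qed
  moreover have "total_edge_length v = 2 ^ CARD('n) * sqrt (trace A)"
  proof -
    have "(\<Sum>i\<in>UNIV. norm (v i)) = (\<Sum>i\<in>UNIV. lam i * a i)"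
      using sumnorm[OF B_sqrt, of lam v U] lpos unfolding a_def v_def by (simp add: less_imp_le)
    also have "\<dots> = (\<Sum>i\<in>UNIV. 2 / sqrt (trace A) * (a i)\<^sup>2)"
      unfolding lam_def by (intro sum.cong refl) (simp add: power2_eq_square)
    also have "\<dots> = 2 / sqrt (trace A) * (\<Sum>i\<in>UNIV. (a i)\<^sup>2)" by (rule sum_distrib_left[symmetric])
    also have "\<dots> = 2 / sqrt (trace A) * trace A" using sa by simp
    also have "\<dots> = 2 * sqrt (trace A)" using tA
      by (metis (no_types, lifting) less_imp_le real_div_sqrt times_divide_eq_left times_divide_eq_right)
    finally have "(\<Sum>i\<in>UNIV. norm (v i)) = 2 * sqrt (trace A)" .
    moreover have "(2::real) ^ (CARD('n) - 1) * 2 = 2 ^ CARD('n)"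
      using n1 power_minus_mult[of "CARD('n)" "2::real"] by linarith
    ultimately show ?thesis unfolding total_edge_length_def by (metis mult.assoc mult.commute)
  qed
  ultimately show ?thesis unfolding Let_def v_def lam_def a_def by simp
qed



lemma pow_half:
  assumes "CARD('n::finite) \<ge> 1"
  shows "(2::real) ^ (CARD('n) - 1) * 2 = 2 ^ CARD('n)"
  using assms power_minus_mult[of "CARD('n)" "2::real"] by linarith

lemma parts12:
  fixes A B :: "real^'n::finite^'n" and v :: "'n \<Rightarrow> real^'n"
  assumes A_spd: "sym_pos_def_mat A"
    and B_sqrt: "sym_pos_def_mat B" "B ** B = A"
    and li: "lin_indep_family v" and ins: "inscribed A v"
  shows "total_edge_length v \<le> 2 ^ CARD('n) * sqrt (trace A)"
    and "total_edge_length v = 2 ^ CARD('n) * sqrt (trace A) \<longleftrightarrow>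
          (\<exists>U :: real^'n^'n. \<exists>lam :: 'n \<Rightarrow> real.
             orthogonal_matrix U \<and> (\<forall>i. lam i > 0) \<and> (\<Sum>i\<in>UNIV. (lam i)\<^sup>2) = 4 \<and>
             (\<exists>c. \<forall>i. lam i = c * sqrt (column i U \<bullet> (A *v column i U))) \<and>
             (\<forall>i. v i = lam i *\<^sub>R (B *v column i U)))"
proof -
  have n1: "CARD('n) \<ge> 1" by (simp add: Suc_leI)
  have tel: "total_edge_length v = 2 ^ (CARD('n) - 1) * (\<Sum>i\<in>UNIV. norm (v i))"
    unfolding total_edge_length_def ..
  have key: "(\<Sum>i\<in>UNIV. norm (v i)) = (\<Sum>i\<in>UNIV. lam i * sqrt (column i U \<bullet> (A *v column i U)))"
    "(\<Sum>i\<in>UNIV. (sqrt (column i U \<bullet> (A *v column i U)))\<^sup>2) = trace A" "trace A > 0"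
    if "orthogonal_matrix U" "\<forall>i. lam i > 0" "\<forall>i. v i = lam i *\<^sub>R (B *v column i U)" for U lam
    using sumnorm[OF B_sqrt, of lam v U] asq[OF A_spd that(1)] that by (auto simp: less_imp_le)
  obtain U lam where U: "orthogonal_matrix U" and lp: "\<forall>i. lam i > 0"
    and sl: "(\<Sum>i\<in>UNIV. (lam i)\<^sup>2) = 4" and vd: "\<forall>i. v i = lam i *\<^sub>R (B *v column i U)"
    using decomp[OF A_spd B_sqrt li ins] by blast
  define a where "a i = sqrt (column i U \<bullet> (A *v column i U))" for i
  have k1: "(\<Sum>i\<in>UNIV. norm (v i)) = (\<Sum>i\<in>UNIV. lam i * a i)"
    and k2: "(\<Sum>i\<in>UNIV. (a i)\<^sup>2) = trace A" and tA: "trace A > 0"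
    using key[OF U lp vd] unfolding a_def by auto
  have cs: "(\<Sum>i\<in>UNIV. lam i * a i) \<le> 2 * sqrt (trace A)"
    using cs_sum(1)[of lam a] sl k2 by simp
  have p2: "(2::real) ^ (CARD('n) - 1) > 0" by simp
  show "total_edge_length v \<le> 2 ^ CARD('n) * sqrt (trace A)"
  proof -
    have "total_edge_length v \<le> 2 ^ (CARD('n) - 1) * (2 * sqrt (trace A))"
      unfolding tel k1 using cs p2 by (simp add: mult_left_mono)
    thus ?thesis using pow_half[OF n1] by (simp add: mult.assoc[symmetric])
  qed
  have telr: "total_edge_length v = 2 ^ CARD('n) * sqrt (trace A) \<longleftrightarrow>
      (\<Sum>i\<in>UNIV. norm (v i)) = 2 * sqrt (trace A)"
  proof -
    have eq: "2 ^ CARD('n) * sqrt (trace A) = 2 ^ (CARD('n) - 1) * (2 * sqrt (trace A))"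
      using pow_half[OF n1] by (simp add: mult.assoc[symmetric])
    show ?thesis unfolding tel eq using p2 by (metis mult_cancel_left less_irrefl)
  qed
  show "total_edge_length v = 2 ^ CARD('n) * sqrt (trace A) \<longleftrightarrow>
          (\<exists>U :: real^'n^'n. \<exists>lam :: 'n \<Rightarrow> real.
             orthogonal_matrix U \<and> (\<forall>i. lam i > 0) \<and> (\<Sum>i\<in>UNIV. (lam i)\<^sup>2) = 4 \<and>
             (\<exists>c. \<forall>i. lam i = c * sqrt (column i U \<bullet> (A *v column i U))) \<and>
             (\<forall>i. v i = lam i *\<^sub>R (B *v column i U)))"
  proof
    assume "total_edge_length v = 2 ^ CARD('n) * sqrt (trace A)"
    hence "(\<Sum>i\<in>UNIV. lam i * a i) = sqrt (\<Sum>i\<in>UNIV. (lam i)\<^sup>2) * sqrt (\<Sum>i\<in>UNIV. (a i)\<^sup>2)"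
      using telr k1 sl k2 by simp
    hence "sqrt (\<Sum>i\<in>UNIV. (lam i)\<^sup>2) * a i = sqrt (\<Sum>i\<in>UNIV. (a i)\<^sup>2) * lam i" for i
      by (rule cs_sum(2))
    hence "2 * a i = sqrt (trace A) * lam i" for i using sl k2 by simp
    hence "\<forall>i. lam i = 2 / sqrt (trace A) * a i" using tA
      by (metis nonzero_mult_div_cancel_left real_sqrt_gt_0_iff less_irrefl times_divide_eq_left)
    thus "\<exists>U lam. orthogonal_matrix U \<and> (\<forall>i. lam i > 0) \<and> (\<Sum>i\<in>UNIV. (lam i)\<^sup>2) = 4 \<and>
             (\<exists>c. \<forall>i. lam i = c * sqrt (column i U \<bullet> (A *v column i U))) \<and>
             (\<forall>i. v i = lam i *\<^sub>R (B *v column i U))"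
      using U lp sl vd unfolding a_def by blast
  next
    assume "\<exists>U lam. orthogonal_matrix U \<and> (\<forall>i. lam i > 0) \<and> (\<Sum>i\<in>UNIV. (lam i)\<^sup>2) = 4 \<and>
             (\<exists>c. \<forall>i. lam i = c * sqrt (column i U \<bullet> (A *v column i U))) \<and>
             (\<forall>i. v i = lam i *\<^sub>R (B *v column i U))"
    then obtain U' lam' c where U': "orthogonal_matrix U'" and lp': "\<forall>i. lam' i > 0"
      and sl': "(\<Sum>i\<in>UNIV. (lam' i)\<^sup>2) = 4"
      and lc: "\<forall>i. lam' i = c * sqrt (column i U' \<bullet> (A *v column i U'))"
      and vd': "\<forall>i. v i = lam' i *\<^sub>R (B *v column i U')" by blast
    define a' where "a' i = sqrt (column i U' \<bullet> (A *v column i U'))" for i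
    have k1': "(\<Sum>i\<in>UNIV. norm (v i)) = (\<Sum>i\<in>UNIV. lam' i * a' i)"
      and k2': "(\<Sum>i\<in>UNIV. (a' i)\<^sup>2) = trace A"
      using key[OF U' lp' vd'] unfolding a'_def by auto
    have lc': "lam' i = c * a' i" for i using lc unfolding a'_def by simp
    have ap: "a' i \<ge> 0" for i unfolding a'_def using apos[OF A_spd U', of i] by simp
    obtain i0 :: 'n where True by blast
    have cpos: "c > 0"
    proof (rule ccontr)
      assume "\<not> c > 0"
      hence "c * a' i0 \<le> 0" using ap[of i0] by (simp add: mult_nonpos_nonneg)
      moreover have "lam' i0 > 0" using lp' by blast
      ultimately show False using lc'[of i0] by linarith
    qed
    have "(\<Sum>i\<in>UNIV. (lam' i)\<^sup>2) = (\<Sum>i\<in>UNIV. c\<^sup>2 * (a' i)\<^sup>2)"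
      using lc' by (simp add: power_mult_distrib)
    also have "\<dots> = c\<^sup>2 * (\<Sum>i\<in>UNIV. (a' i)\<^sup>2)" by (rule sum_distrib_left[symmetric])
    also have "\<dots> = c\<^sup>2 * trace A" using k2' by simp
    finally have c2: "c\<^sup>2 * trace A = 4" using sl' by simp
    have cs2: "c * sqrt (trace A) = 2"
    proof -
      have "(c * sqrt (trace A))\<^sup>2 = 4" using c2 tA by (simp add: power_mult_distrib)
      moreover have "c * sqrt (trace A) \<ge> 0" using cpos tA by simp
      ultimately have "sqrt 4 = c * sqrt (trace A)" by (rule real_sqrt_unique)
      thus ?thesis by simp
    qed
    have "(\<Sum>i\<in>UNIV. lam' i * a' i) = (\<Sum>i\<in>UNIV. c * (a' i)\<^sup>2)"
      using lc' by (simp add: power2_eq_square mult.assoc)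
    also have "\<dots> = c * (\<Sum>i\<in>UNIV. (a' i)\<^sup>2)" by (rule sum_distrib_left[symmetric])
    also have "\<dots> = c * trace A" using k2' by simp
    also have "\<dots> = c * sqrt (trace A) * sqrt (trace A)" using tA
      by (simp add: mult.assoc less_imp_le)
    also have "\<dots> = 2 * sqrt (trace A)" using cs2 by simp
    finally show "total_edge_length v = 2 ^ CARD('n) * sqrt (trace A)"
      using telr k1' by simp
  qed
qed

theorem theorem3p1:
  fixes A B :: "real^'n::finite^'n"
  assumes n2: "CARD('n) \<ge> 2"
    and A_spd: "sym_pos_def_mat A"
    and B_sqrt: "sym_pos_def_mat B" "B ** B = A"
  shows
    "(\<forall>v :: 'n \<Rightarrow> real^'n. lin_indep_family v \<and> inscribed A v \<longrightarrow>
        total_edge_length v \<le> 2 ^ CARD('n) * sqrt (trace A))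
     \<and> (\<forall>v :: 'n \<Rightarrow> real^'n. lin_indep_family v \<and> inscribed A v \<longrightarrow>
        (total_edge_length v = 2 ^ CARD('n) * sqrt (trace A) \<longleftrightarrow>
          (\<exists>U :: real^'n^'n. \<exists>lam :: 'n \<Rightarrow> real.
             orthogonal_matrix U \<and> (\<forall>i. lam i > 0) \<and> (\<Sum>i\<in>UNIV. (lam i)\<^sup>2) = 4 \<and>
             (\<exists>c. \<forall>i. lam i = c * sqrt (column i U \<bullet> (A *v column i U))) \<and>
             (\<forall>i. v i = lam i *\<^sub>R (B *v column i U)))))
     \<and> (\<forall>U :: real^'n^'n. orthogonal_matrix U \<longrightarrow>
        (let lam = (\<lambda>i. 2 * sqrt (column i U \<bullet> (A *v column i U)) / sqrt (trace A));
             v = (\<lambda>i. lam i *\<^sub>R (B *v column i U))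
         in lin_indep_family v \<and> inscribed A v \<and>
            total_edge_length v = 2 ^ CARD('n) * sqrt (trace A)))"
  proof (intro conjI allI impI)
  fix v :: "'n \<Rightarrow> real^'n" assume "lin_indep_family v \<and> inscribed A v"
  thus "total_edge_length v \<le> 2 ^ CARD('n) * sqrt (trace A)"
    using parts12(1)[OF A_spd B_sqrt] by blast
next
  fix v :: "'n \<Rightarrow> real^'n" assume "lin_indep_family v \<and> inscribed A v"
  thus "total_edge_length v = 2 ^ CARD('n) * sqrt (trace A) \<longleftrightarrow>
          (\<exists>U :: real^'n^'n. \<exists>lam :: 'n \<Rightarrow> real.
             orthogonal_matrix U \<and> (\<forall>i. lam i > 0) \<and> (\<Sum>i\<in>UNIV. (lam i)\<^sup>2) = 4 \<and>
             (\<exists>c. \<forall>i. lam i = c * sqrt (column i U \<bullet> (A *v column i U))) \<and>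
             (\<forall>i. v i = lam i *\<^sub>R (B *v column i U)))"
    using parts12(2)[OF A_spd B_sqrt] by blast
next
  fix U :: "real^'n^'n" assume "orthogonal_matrix U"
  moreover have "CARD('n) \<ge> 1" using n2 by simp
  ultimately show "let lam = (\<lambda>i. 2 * sqrt (column i U \<bullet> (A *v column i U)) / sqrt (trace A));
             v = (\<lambda>i. lam i *\<^sub>R (B *v column i U))
         in lin_indep_family v \<and> inscribed A v \<and>
            total_edge_length v = 2 ^ CARD('n) * sqrt (trace A)"
    by (rule part3[OF A_spd B_sqrt])
qed

end
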